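(* Fix $n$, $\mu_n>0$ and $t\in\mathbb R$, and for $\delta\in\mathbb R$ let $\theta_n(\delta)=-(t+\delta)/n^{1/2}$. Then $$\lim_{\delta\downarrow0}\big|F_{A,n,\theta_n(-\delta)}(t)-F_{A,n,\theta_n(\delta)}(t)\big|=\Phi(t+n^{1/2}\mu_n)-\Phi(t-n^{1/2}\mu_n).$$
   Context: Gaussian location model: for each sample size $n$, $y_1,\dots,y_n$ are i.i.d. $N(\theta,1)$ with $\theta\in\mathbb R$ unknown; $\bar y$ is their mean. $P_{n,\theta}$ denotes the probability governing a sample of size $n$ when $\theta$ is the true parameter. Given a nonrandom tuning parameter $\mu_n>0$, the adaptive LASSO estimator is $\hat\theta_A=0$ if $|\bar y|\le\mu_n$ and $\hat\theta_A=\bar y-\mu_n^2/\bar y$ if $|\bar y|>\mu_n$. $F_{A,n,\theta}$ denotes the cdf of $n^{1/2}(\hat\theta_A-\theta)$ under $P_{n,\theta}$. $\Phi$ is the standard normal cdf. *)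

theory Defs
  imports "HOL-Probability.Probability"
begin

definition Phi :: "real \<Rightarrow> real" where
  "Phi x = measure (density lborel std_normal_density) {..x}"

definition sample_measure :: "nat \<Rightarrow> real \<Rightarrow> (nat \<Rightarrow> real) measure" where
  "sample_measure n \<theta> = PiM {..<n} (\<lambda>_. density lborel (normal_density \<theta> 1))"

definition ybar :: "nat \<Rightarrow> (nat \<Rightarrow> real) \<Rightarrow> real" where
  "ybar n y = (\<Sum>i<n. y i) / real n"

(* adaptive LASSO estimator as function of the sample mean and tuning parameter mu *)
definition adaLASSO :: "real \<Rightarrow> real \<Rightarrow> real" where
  "adaLASSO mu yb = (if \<bar>yb\<bar> \<le> mu then 0 else yb - mu\<^sup>2 / yb)"

definition F_A :: "nat \<Rightarrow> real \<Rightarrow> real \<Rightarrow> real \<Rightarrow> real" where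
  "F_A n mu \<theta> t = measure (sample_measure n \<theta>)
     {y \<in> space (sample_measure n \<theta>). sqrt (real n) * (adaLASSO mu (ybar n y) - \<theta>) \<le> t}"

end

theory Submission
  imports Defs
begin

definition Dn :: "real measure" where "Dn = density lborel std_normal_density"

lemma Dn_real: "real_distribution Dn"
  using prob_space_normal_density unfolding Dn_def
  by (auto simp: real_distribution_def real_distribution_axioms_def)

lemma Phi_cdf: "Phi = cdf Dn"
  by (auto simp: Phi_def cdf_def Dn_def)

lemma Dn_single: "measure Dn {x} = 0"
  unfolding Dn_def
  by (simp add: measure_def emeasure_density nn_integral_null_set)

lemma Phi_cont: "isCont Phi x"
  unfolding Phi_cdf
  using finite_borel_measure.isCont_cdf[OF real_distribution.finite_borel_measure_M[OF Dn_real]] Dn_single by simp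

lemma Phi_mono: "x \<le> y \<Longrightarrow> Phi x \<le> Phi y"
  unfolding Phi_cdf using Dn_real
  by (simp add: real_distribution_def finite_borel_measure.cdf_nondecreasing real_distribution.finite_borel_measure_M)

lemma sample_prob: "prob_space (sample_measure n \<theta>)"
  unfolding sample_measure_def by (auto intro!: prob_space_PiM prob_space_normal_density)

lemma sample_indep:
  assumes "n > 0"
  shows "prob_space.indep_vars (sample_measure n \<theta>) (\<lambda>_. density lborel (normal_density \<theta> 1)) (\<lambda>i y. y i) {..<n}"
proof -
  define N where "N = density lborel (normal_density \<theta> 1)"
  define M where "M = sample_measure n \<theta>"
  have MN: "M = PiM {..<n} (\<lambda>_. N)" by (simp add: M_def N_def sample_measure_def)
  interpret prob_space M using sample_prob M_def by simp
  have pN: "prob_space N" using prob_space_normal_density N_def by simp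
  have rv: "random_variable N (\<lambda>y. y i)" if "i \<in> {..<n}" for i
    unfolding MN using that by measurable
  have "distr M (\<Pi>\<^sub>M i\<in>{..<n}. N) (\<lambda>x. \<lambda>i\<in>{..<n}. x i) = M"
  proof -
    have "distr M (\<Pi>\<^sub>M i\<in>{..<n}. N) (\<lambda>x. \<lambda>i\<in>{..<n}. x i) = distr M M (\<lambda>x. x)"
      by (rule distr_cong) (auto simp: MN space_PiM PiE_def extensional_def restrict_def)
    also have "\<dots> = M" by simp
    finally show ?thesis .
  qed
  moreover have "(\<Pi>\<^sub>M i\<in>{..<n}. distr M N (\<lambda>y. y i)) = M"
  proof -
    have "(\<Pi>\<^sub>M i\<in>{..<n}. distr M N (\<lambda>y. y i)) = (\<Pi>\<^sub>M i\<in>{..<n}. N)"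
      by (rule PiM_cong) (auto simp: MN intro!: distr_PiM_component pN)
    then show ?thesis by (simp add: MN)
  qed
  ultimately have "indep_vars (\<lambda>_. N) (\<lambda>i y. y i) {..<n}"
    using indep_vars_iff_distr_eq_PiM'[where I="{..<n}" and M'="\<lambda>_. N" and X="\<lambda>i y. y i"] rv assms by auto
  then show ?thesis using M_def N_def by simp
qed

lemma sample_cdf:
  assumes "n > 0"
  shows "measure (sample_measure n \<theta>) {y \<in> space (sample_measure n \<theta>). ybar n y \<le> c}
         = Phi (sqrt (real n) * (c - \<theta>))"
proof -
  define N where "N = density lborel (normal_density \<theta> 1)"
  define M where "M = sample_measure n \<theta>"
  have MN: "M = PiM {..<n} (\<lambda>_. N)" by (simp add: M_def N_def sample_measure_def)
  interpret prob_space M using sample_prob M_def by simp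
  have pN: "prob_space N" using prob_space_normal_density N_def by simp
  have ind0: "indep_vars (\<lambda>_. N) (\<lambda>i y. y i) {..<n}"
    using sample_indep[OF assms] M_def N_def by simp
  have ind: "indep_vars (\<lambda>_. borel) (\<lambda>i y. y i) {..<n}"
    using indep_vars_compose2[OF ind0, of "\<lambda>_ x. x" "\<lambda>_. borel"]
    by (simp add: N_def)
  have comp: "distributed M lborel (\<lambda>y. y i) (normal_density \<theta> 1)" if "i \<in> {..<n}" for i
  proof -
    have "distr M lborel (\<lambda>y. y i) = distr M N (\<lambda>y. y i)"
      by (rule distr_cong) (auto simp: N_def)
    also have "\<dots> = N" unfolding MN by (rule distr_PiM_component) (use that pN in auto)
    finally show ?thesis unfolding distributed_def using that
      by (auto simp: N_def MN)
  qed
  have S: "distributed M lborel (\<lambda>x. \<Sum>i\<in>{..<n}. x i)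
      (normal_density (\<Sum>i\<in>{..<n}. \<theta>) (sqrt (\<Sum>i\<in>{..<n}. 1\<^sup>2)))"
    by (rule sum_indep_normal[OF _ _ ind]) (use assms comp in auto)
  have S': "distributed M lborel (\<lambda>x. \<Sum>i<n. x i) (normal_density (real n * \<theta>) (sqrt (real n)))"
    using S by simp
  have sq: "0 < sqrt (real n)" using assms by simp
  have Z: "distributed M lborel (\<lambda>x. ((\<Sum>i<n. x i) - real n * \<theta>) / sqrt (real n)) std_normal_density"
    using S' normal_standard_normal_convert[OF sq] by simp
  define Zf where "Zf = (\<lambda>x. ((\<Sum>i<n. x i) - real n * \<theta>) / sqrt (real n))"
  have Zm: "Zf \<in> measurable M lborel" using Z unfolding distributed_def Zf_def by simp
  have Zd: "distr M lborel Zf = density lborel std_normal_density"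
    using Z unfolding distributed_def Zf_def by simp
  have key: "ybar n y \<le> c \<longleftrightarrow> Zf y \<le> sqrt (real n) * (c - \<theta>)" for y
  proof -
    have nn: "real n = sqrt (real n) * sqrt (real n)" by simp
    have "ybar n y \<le> c \<longleftrightarrow> (\<Sum>i<n. y i) \<le> real n * c"
      using assms by (simp add: ybar_def divide_le_eq mult.commute)
    also have "\<dots> \<longleftrightarrow> (\<Sum>i<n. y i) - real n * \<theta> \<le> sqrt (real n) * (sqrt (real n) * (c - \<theta>))"
      by (subst mult.assoc[symmetric], subst nn[symmetric]) (simp add: algebra_simps)
    also have "\<dots> \<longleftrightarrow> Zf y \<le> sqrt (real n) * (c - \<theta>)"
      unfolding Zf_def using sq by (simp add: divide_le_eq mult.commute)
    finally show ?thesis .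
  qed
  have "{y \<in> space M. ybar n y \<le> c} = Zf -` {..sqrt (real n) * (c - \<theta>)} \<inter> space M"
    using key by auto
  then have "measure M {y \<in> space M. ybar n y \<le> c} = measure (distr M lborel Zf) {..sqrt (real n) * (c - \<theta>)}"
    using Zm by (simp add: measure_distr)
  also have "\<dots> = Phi (sqrt (real n) * (c - \<theta>))" by (simp add: Zd Phi_def)
  finally show ?thesis by (simp add: M_def)
qed

lemma ada_pos:
  fixes a mu x :: real
  assumes a: "a > 0" and mu: "mu > 0"
  defines "c \<equiv> (a + sqrt (a\<^sup>2 + 4 * mu\<^sup>2)) / 2"
  shows "adaLASSO mu x \<le> a \<longleftrightarrow> x \<le> c"
proof -
  define s where "s = sqrt (a\<^sup>2 + 4 * mu\<^sup>2)"
  have s2: "s\<^sup>2 = a\<^sup>2 + 4 * mu\<^sup>2" unfolding s_def by simp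
  have s0: "s \<ge> 0" unfolding s_def by simp
  have sa: "s > a" using s2 s0 a mu by (smt (verit) power_mono pos2 zero_less_power)
  have s2m: "s > 2 * mu"
  proof -
    have "(2*mu)\<^sup>2 < s\<^sup>2" using s2 a by (simp add: power2_eq_square)
    thus ?thesis using s0 mu by (smt (verit) power_mono)
  qed
  have cdef: "c = (a + s)/2" by (simp add: c_def s_def)
  have fac: "x\<^sup>2 - a*x - mu\<^sup>2 = (x - c) * (x - (a - c))" for x
    unfolding cdef using s2 by (simp add: power2_eq_square algebra_simps)
  show ?thesis
  proof (cases "\<bar>x\<bar> \<le> mu")
    case True
    then show ?thesis using a cdef s2m by (auto simp: adaLASSO_def)
  next
    case False
    show ?thesis
    proof (cases "x < 0")
      case True
      with False have xm: "x < - mu" by auto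
      have "x * x > mu\<^sup>2" using xm mu by (smt (verit) mult_strict_mono' power2_eq_square mult_minus_left mult_minus_right minus_mult_minus)
      then have "mu\<^sup>2 / x > x" using True by (simp add: less_divide_eq)  
      then show ?thesis using False a xm cdef s2m mu by (auto simp: adaLASSO_def)
    next
      case f2: False
      with False have xp: "x > mu" by auto
      have "adaLASSO mu x \<le> a \<longleftrightarrow> x - mu\<^sup>2/x \<le> a" using False by (simp add: adaLASSO_def)
      also have "\<dots> \<longleftrightarrow> x\<^sup>2 - a*x - mu\<^sup>2 \<le> 0"
        using xp mu by (simp add: field_simps power2_eq_square)
      also have "\<dots> \<longleftrightarrow> x \<le> c"
        unfolding fac using xp mu cdef sa by (auto simp: mult_le_0_iff)
      finally show ?thesis .
    qed
  qed
qed

lemma ada_neg: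
  fixes a mu x :: real
  assumes a: "a > 0" and mu: "mu > 0"
  defines "c \<equiv> (a + sqrt (a\<^sup>2 + 4 * mu\<^sup>2)) / 2"
  shows "adaLASSO mu x \<le> - a \<longleftrightarrow> x \<le> - c"
proof -
  define s where "s = sqrt (a\<^sup>2 + 4 * mu\<^sup>2)"
  have s2: "s\<^sup>2 = a\<^sup>2 + 4 * mu\<^sup>2" unfolding s_def by simp
  have s0: "s \<ge> 0" unfolding s_def by simp
  have sa: "s > a" using s2 s0 a mu by (smt (verit) power_mono pos2 zero_less_power)
  have s2m: "s > 2 * mu"
  proof -
    have "(2*mu)\<^sup>2 < s\<^sup>2" using s2 a by (simp add: power2_eq_square)
    thus ?thesis using s0 mu by (smt (verit) power_mono)
  qed
  have cdef: "c = (a + s)/2" by (simp add: c_def s_def)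
  have fac: "x\<^sup>2 + a*x - mu\<^sup>2 = (x + c) * (x + (a - c))" for x
    unfolding cdef using s2 by (simp add: power2_eq_square field_simps)
  show ?thesis
  proof (cases "\<bar>x\<bar> \<le> mu")
    case True
    then show ?thesis using a cdef s2m by (auto simp: adaLASSO_def)
  next
    case False
    show ?thesis
    proof (cases "x < 0")
      case f2: False
      with False have xp: "x > mu" by auto
      have "x * x > mu\<^sup>2" using xp mu by (simp add: power2_eq_square mult_strict_mono)
      then have "mu\<^sup>2 / x < x" using xp mu by (simp add: divide_less_eq)  
      then show ?thesis using False a xp cdef s2m mu by (auto simp: adaLASSO_def)
    next
      case True
      with False have xm: "x < - mu" by auto
      have "adaLASSO mu x \<le> - a \<longleftrightarrow> x - mu\<^sup>2/x \<le> - a" using False by (simp add: adaLASSO_def)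
      also have "\<dots> \<longleftrightarrow> x\<^sup>2 + a*x - mu\<^sup>2 \<ge> 0"
        using xm mu True by (simp add: field_simps power2_eq_square)
      also have "\<dots> \<longleftrightarrow> x \<le> - c"
        unfolding fac using xm mu cdef sa True by (auto simp: zero_le_mult_iff)
      finally show ?thesis .
    qed
  qed
qed

lemma shift_eq:
  fixes A u t d :: real
  assumes "u > 0"
  shows "u * (A - (- (t + d) / u)) \<le> t \<longleftrightarrow> A \<le> - d / u"
proof -
  have "u * (A - (- (t + d) / u)) = u * A + t + d" using assms by (simp add: field_simps)
  moreover have "A \<le> - d / u \<longleftrightarrow> A * u \<le> - d" using pos_le_divide_eq[OF assms, of A "-d"] by simp
  ultimately show ?thesis by (simp add: mult.commute) linarith
qed

lemma F_minus:
  assumes n: "n > 0" and mu: "mu > 0" and d: "d > 0"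
  defines "c \<equiv> (d / sqrt (real n) + sqrt ((d / sqrt (real n))\<^sup>2 + 4 * mu\<^sup>2)) / 2"
  shows "F_A n mu (- (t + - d) / sqrt (real n)) t = Phi (sqrt (real n) * c + t - d)"
proof -
  have u: "sqrt (real n) > 0" using n by simp
  have a: "d / sqrt (real n) > 0" using u d by simp
  let ?th = "- (t + - d) / sqrt (real n)"
  have "{y \<in> space (sample_measure n ?th). sqrt (real n) * (adaLASSO mu (ybar n y) - ?th) \<le> t}
      = {y \<in> space (sample_measure n ?th). ybar n y \<le> c}"
    using shift_eq[OF u, of _ t "-d"] ada_pos[OF a mu] unfolding c_def by auto
  then have "F_A n mu ?th t = Phi (sqrt (real n) * (c - ?th))"
    unfolding F_A_def using sample_cdf[OF n] by simp
  also have "sqrt (real n) * (c - ?th) = sqrt (real n) * c + t - d"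
    using u by (simp add: field_simps)
  finally show ?thesis .
qed

lemma F_plus:
  assumes n: "n > 0" and mu: "mu > 0" and d: "d > 0"
  defines "c \<equiv> (d / sqrt (real n) + sqrt ((d / sqrt (real n))\<^sup>2 + 4 * mu\<^sup>2)) / 2"
  shows "F_A n mu (- (t + d) / sqrt (real n)) t = Phi (- (sqrt (real n) * c) + t + d)"
proof -
  have u: "sqrt (real n) > 0" using n by simp
  have a: "d / sqrt (real n) > 0" using u d by simp
  let ?th = "- (t + d) / sqrt (real n)"
  have "{y \<in> space (sample_measure n ?th). sqrt (real n) * (adaLASSO mu (ybar n y) - ?th) \<le> t}
      = {y \<in> space (sample_measure n ?th). ybar n y \<le> - c}"
    using shift_eq[OF u, of _ t "d"] ada_neg[OF a mu] unfolding c_def by auto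
  then have "F_A n mu ?th t = Phi (sqrt (real n) * (- c - ?th))"
    unfolding F_A_def using sample_cdf[OF n] by simp
  also have "sqrt (real n) * (- c - ?th) = - (sqrt (real n) * c) + t + d"
    using u by (simp add: field_simps)
  finally show ?thesis .
qed

theorem mainTheorem10:
  fixes n :: nat and mu t :: real and theta_n :: "real \<Rightarrow> real"
  assumes "n > 0" and "mu > 0"
    and "\<And>\<delta>. theta_n \<delta> = - (t + \<delta>) / sqrt (real n)"
  shows "((\<lambda>\<delta>. \<bar>F_A n mu (theta_n (- \<delta>)) t - F_A n mu (theta_n \<delta>) t\<bar>)
           \<longlongrightarrow> Phi (t + sqrt (real n) * mu) - Phi (t - sqrt (real n) * mu)) (at_right 0)"
proof -
  define u where "u = sqrt (real n)"
  have u: "u > 0" using assms(1) by (simp add: u_def)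
  define c where "c = (\<lambda>d. (d / u + sqrt ((d / u)\<^sup>2 + 4 * mu\<^sup>2)) / 2)"
  have cl: "(c \<longlongrightarrow> mu) (at_right 0)"
  proof -
    have "(c \<longlongrightarrow> (0 / u + sqrt ((0 / u)\<^sup>2 + 4 * mu\<^sup>2)) / 2) (at_right 0)"
      unfolding c_def by (intro tendsto_intros tendsto_ident_at) (use u in auto)
    moreover have "(0 / u + sqrt ((0 / u)\<^sup>2 + 4 * mu\<^sup>2)) / 2 = mu"
    proof -
      have "sqrt (4 * mu\<^sup>2) = 2 * mu" using assms(2)
        by (simp add: real_sqrt_mult)
      then show ?thesis by simp
    qed
    ultimately show ?thesis by simp
  qed
  have L1: "((\<lambda>d. Phi (u * c d + t - d)) \<longlongrightarrow> Phi (u * mu + t - 0)) (at_right 0)"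
    by (rule isCont_tendsto_compose[OF Phi_cont]) (intro tendsto_intros cl tendsto_ident_at)
  have L2: "((\<lambda>d. Phi (- (u * c d) + t + d)) \<longlongrightarrow> Phi (- (u * mu) + t + 0)) (at_right 0)"
    by (rule isCont_tendsto_compose[OF Phi_cont]) (intro tendsto_intros cl tendsto_ident_at)
  have nonneg: "Phi (t + u * mu) - Phi (t - u * mu) \<ge> 0"
    using Phi_mono[of "t - u * mu" "t + u * mu"] u assms(2) by simp
  have L: "((\<lambda>d. \<bar>Phi (u * c d + t - d) - Phi (- (u * c d) + t + d)\<bar>)
      \<longlongrightarrow> \<bar>Phi (u * mu + t - 0) - Phi (- (u * mu) + t + 0)\<bar>) (at_right 0)"
    by (intro tendsto_intros L1 L2)
  have eqv: "\<bar>Phi (u * mu + t - 0) - Phi (- (u * mu) + t + 0)\<bar>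
      = Phi (t + sqrt (real n) * mu) - Phi (t - sqrt (real n) * mu)"
    using nonneg by (simp add: u_def algebra_simps)
  have ev: "\<forall>\<^sub>F d in at_right 0. \<bar>Phi (u * c d + t - d) - Phi (- (u * c d) + t + d)\<bar>
      = \<bar>F_A n mu (theta_n (- d)) t - F_A n mu (theta_n d) t\<bar>"
    using eventually_at_right_less[of "0::real"]
  proof (rule eventually_mono)
    fix d :: real assume d: "0 < d"
    show "\<bar>Phi (u * c d + t - d) - Phi (- (u * c d) + t + d)\<bar>
      = \<bar>F_A n mu (theta_n (- d)) t - F_A n mu (theta_n d) t\<bar>"
      using F_minus[OF assms(1,2) d, of t] F_plus[OF assms(1,2) d, of t]
      by (simp add: assms(3) c_def u_def)
  qed
  show ?thesis using tendsto_cong[OF ev] L eqv by simp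
qed

end
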